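(* $\mathbb F_0\subsetneq\mathbb F_{\sqrt x}\cap\mathbb R$; that is, every origami number is constructible by compass and straightedge, but some real numbers constructible by compass and straightedge are not origami numbers.
   Context: An origami pair is a pair $(\mathcal P,\mathcal L)$ where $\mathcal P\subset\mathbb R^2$ is a set of points and $\mathcal L$ is a collection of lines in $\mathbb R^2$ such that: (i) the intersection point of any two non-parallel lines of $\mathcal L$ lies in $\mathcal P$; (ii) for any two distinct points of $\mathcal P$, the line through them is in $\mathcal L$; (iii) for any two distinct points of $\mathcal P$, the perpendicular bisector of the segment joining them is in $\mathcal L$; (iv) if $L_1,L_2\in\mathcal L$, then every line equidistant from $L_1$ and $L_2$ is in $\mathcal L$ (the midline if they are parallel, the angle bisectors if they intersect); (v) if $L_1,L_2\in\mathcal L$, then the mirror reflection of $L_2$ across $L_1$ is in $\mathcal L$. A set $\mathcal P\subset\mathbb R^2$ is closed under origami constructions if there is a collection of lines $\mathcal L$ with $(\mathcal P,\mathcal L)$ an origami pair. The set of origami constructible points is $\mathcal P_0=\bigcap\{\mathcal P : (0,0),(0,1)\in\mathcal P \text{ and } \mathcal P \text{ is closed under origami constructions}\}$. The set of origami numbers is $\mathbb F_0=\{\alpha\in\mathbb R : \exists v_1,v_2\in\mathcal P_0,\ |\alpha|=\operatorname{dist}(v_1,v_2)\}$. $\mathbb F_{\sqrt x}$ denotes the smallest subfield of $\mathbb C$ that contains a square root of each of its elements; $\mathbb F_{\sqrt x}\cap\mathbb R$ is the set of real numbers constructible by compass and straightedge. *)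

theory Defs
  imports "HOL-Analysis.Analysis"
begin

definition line_through :: "complex \<Rightarrow> complex \<Rightarrow> complex set" where
  "line_through a b = {a + complex_of_real t * (b - a) | t. True}"

definition is_line :: "complex set \<Rightarrow> bool" where
  "is_line L \<longleftrightarrow> (\<exists>a b. a \<noteq> b \<and> L = line_through a b)"

definition reflect_across :: "complex \<Rightarrow> complex \<Rightarrow> complex \<Rightarrow> complex" where
  "reflect_across a b z = a + ((b - a) / cnj (b - a)) * cnj (z - a)"

definition perp_bisector :: "complex \<Rightarrow> complex \<Rightarrow> complex set" where
  "perp_bisector p q = {z. dist z p = dist z q}"

definition origami_pair :: "complex set \<Rightarrow> complex set set \<Rightarrow> bool" where
  "origami_pair P \<L> \<longleftrightarrow>
     (\<forall>L\<in>\<L>. is_line L) \<and>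
     \<comment> \<open>(i) intersection point of two non-parallel lines\<close>
     (\<forall>L1\<in>\<L>. \<forall>L2\<in>\<L>. \<forall>p. L1 \<inter> L2 = {p} \<longrightarrow> p \<in> P) \<and>
     \<comment> \<open>(ii) line through two distinct points\<close>
     (\<forall>p\<in>P. \<forall>q\<in>P. p \<noteq> q \<longrightarrow> line_through p q \<in> \<L>) \<and>
     \<comment> \<open>(iii) perpendicular bisector\<close>
     (\<forall>p\<in>P. \<forall>q\<in>P. p \<noteq> q \<longrightarrow> perp_bisector p q \<in> \<L>) \<and>
     \<comment> \<open>(iv) every line equidistant from two distinct lines (midline / angle bisectors)\<close>
     (\<forall>L1\<in>\<L>. \<forall>L2\<in>\<L>. \<forall>L. L1 \<noteq> L2 \<and> is_line L \<and>
          L \<subseteq> {z. infdist z L1 = infdist z L2} \<longrightarrow> L \<in> \<L>) \<and>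
     \<comment> \<open>(v) mirror reflection of L2 across L1\<close>
     (\<forall>L1\<in>\<L>. \<forall>L2\<in>\<L>. \<forall>a b. a \<noteq> b \<and> L1 = line_through a b \<longrightarrow>
          reflect_across a b ` L2 \<in> \<L>)"

definition origami_closed :: "complex set \<Rightarrow> bool" where
  "origami_closed P \<longleftrightarrow> (\<exists>\<L>. origami_pair P \<L>)"

definition origami_points :: "complex set" where
  "origami_points = \<Inter>{P. 0 \<in> P \<and> \<i> \<in> P \<and> origami_closed P}"

definition origami_numbers :: "real set" where
  "origami_numbers = {\<alpha>. \<exists>v1\<in>origami_points. \<exists>v2\<in>origami_points. \<bar>\<alpha>\<bar> = dist v1 v2}"

definition is_subfield :: "complex set \<Rightarrow> bool" where
  "is_subfield K \<longleftrightarrow> 0 \<in> K \<and> 1 \<in> K \<and>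
     (\<forall>x\<in>K. \<forall>y\<in>K. x + y \<in> K \<and> x - y \<in> K \<and> x * y \<in> K) \<and>
     (\<forall>x\<in>K. x \<noteq> 0 \<longrightarrow> inverse x \<in> K)"

definition F_sqrt :: "complex set" where
  "F_sqrt = \<Inter>{K. is_subfield K \<and> (\<forall>z\<in>K. \<exists>w\<in>K. w\<^sup>2 = z)}"

end

theory Submission
  imports Defs
begin


definition lineR :: "real \<Rightarrow> real \<Rightarrow> real \<Rightarrow> complex set" where
  "lineR A B C = {z. A * Re z + B * Im z = C}"

lemma mem_line_through:
  "z \<in> line_through a b \<longleftrightarrow> (\<exists>t. Re z = Re a + t*(Re b - Re a) \<and> Im z = Im a + t*(Im b - Im a))"
proof
  assume "z \<in> line_through a b"
  then obtain t where "z = a + complex_of_real t * (b - a)" unfolding line_through_def by blast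
  then show "\<exists>t. Re z = Re a + t*(Re b - Re a) \<and> Im z = Im a + t*(Im b - Im a)"
    by (intro exI[of _ t]) simp
next
  assume "\<exists>t. Re z = Re a + t*(Re b - Re a) \<and> Im z = Im a + t*(Im b - Im a)"
  then obtain t where "Re z = Re a + t*(Re b - Re a)" "Im z = Im a + t*(Im b - Im a)" by blast
  then have "z = a + complex_of_real t * (b - a)" by (simp add: complex_eq_iff)
  then show "z \<in> line_through a b" unfolding line_through_def by blast
qed

lemma sumsq_pos: "A \<noteq> 0 \<or> B \<noteq> 0 \<Longrightarrow> (0::real) < A\<^sup>2 + B\<^sup>2"
  by (simp add: sum_power2_gt_zero_iff)

lemma lineR_line:
  assumes AB: "A \<noteq> 0 \<or> B \<noteq> 0"
  shows "lineR A B C = line_through (Complex (C*A/(A\<^sup>2+B\<^sup>2)) (C*B/(A\<^sup>2+B\<^sup>2)))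
                                    (Complex (C*A/(A\<^sup>2+B\<^sup>2) - B) (C*B/(A\<^sup>2+B\<^sup>2) + A))"
    (is "_ = line_through ?p ?q")
proof (rule set_eqI)
  have n: "A\<^sup>2 + B\<^sup>2 \<noteq> 0" using sumsq_pos[OF AB] by linarith
  fix z
  show "z \<in> lineR A B C \<longleftrightarrow> z \<in> line_through ?p ?q"
  proof
    assume "z \<in> lineR A B C"
    then have h: "A * Re z + B * Im z = C" by (simp add: lineR_def)
    define n where "n = A\<^sup>2+B\<^sup>2"
    have nn: "n \<noteq> 0" using n n_def by simp
    define t where "t = (A * Im z - B * Re z)/n"
    have e1: "Re z * n = C*A - (A*Im z - B*Re z)*B" unfolding n_def h[symmetric]
      by (simp add: power2_eq_square algebra_simps)
    have e2: "Im z * n = C*B + (A*Im z - B*Re z)*A" unfolding n_def h[symmetric]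
      by (simp add: power2_eq_square algebra_simps)
    have "Re z = C*A/(A\<^sup>2+B\<^sup>2) + t * (-B)" unfolding n_def[symmetric] t_def using e1 nn
      by (simp add: field_simps)
    moreover have "Im z = C*B/(A\<^sup>2+B\<^sup>2) + t * A" unfolding n_def[symmetric] t_def using e2 nn
      by (simp add: field_simps)
    ultimately show "z \<in> line_through ?p ?q" unfolding mem_line_through
      by (intro exI[of _ t]) simp
  next
    assume "z \<in> line_through ?p ?q"
    then obtain t where "Re z = C*A/(A\<^sup>2+B\<^sup>2) - t*B" "Im z = C*B/(A\<^sup>2+B\<^sup>2) + t*A"
      unfolding mem_line_through by auto
    then have tt: "A * Re z + B * Im z = A*(C*A/(A\<^sup>2+B\<^sup>2) - t*B) + B*(C*B/(A\<^sup>2+B\<^sup>2) + t*A)"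
      by simp
    define n where "n = A\<^sup>2+B\<^sup>2"
    have nn: "n \<noteq> 0" using n n_def by simp
    have "A * Re z + B * Im z = A*(C*A/n - t*B) + B*(C*B/n + t*A)"
      unfolding n_def by (rule tt)
    also have "\<dots> = C*(A*A+B*B)/n" using nn by (simp add: field_simps)
    also have "\<dots> = C" using nn unfolding n_def by (simp add: power2_eq_square)
    finally show "z \<in> lineR A B C" by (simp add: lineR_def)
  qed
qed

lemma line_sub_eq:
  assumes ab: "a \<noteq> b" and cd: "c \<noteq> d" and sub: "line_through a b \<subseteq> line_through c d"
  shows "line_through a b = line_through c d"
proof -
  have "a \<in> line_through a b" "b \<in> line_through a b" unfolding mem_line_through
    by (auto intro: exI[of _ 0] exI[of _ 1])
  then have "a \<in> line_through c d" "b \<in> line_through c d" using sub by auto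
  then obtain t1 t2 where
    t1: "Re a = Re c + t1*(Re d - Re c)" "Im a = Im c + t1*(Im d - Im c)" and
    t2: "Re b = Re c + t2*(Re d - Re c)" "Im b = Im c + t2*(Im d - Im c)"
    unfolding mem_line_through by blast
  have "t1 \<noteq> t2" using t1 t2 ab by (auto simp: complex_eq_iff)
  then have ne: "t2 - t1 \<noteq> 0" by simp
  show ?thesis
  proof (rule antisym[OF sub], rule subsetI)
    fix z assume "z \<in> line_through c d"
    then obtain t where t: "Re z = Re c + t*(Re d - Re c)" "Im z = Im c + t*(Im d - Im c)"
      unfolding mem_line_through by blast
    define s where "s = (t - t1)/(t2 - t1)"
    have "Re z = Re a + s*(Re b - Re a)" unfolding s_def t t1 t2 using ne
      by (simp add: field_simps)
    moreover have "Im z = Im a + s*(Im b - Im a)" unfolding s_def t t1 t2 using ne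
      by (simp add: field_simps)
    ultimately show "z \<in> line_through a b" unfolding mem_line_through by blast
  qed
qed



lemma line_through_lineR:
  assumes ab: "a \<noteq> b"
  shows "line_through a b = lineR (Im a - Im b) (Re b - Re a) ((Im a - Im b)*Re a + (Re b - Re a)*Im a)"
    and "Im a - Im b \<noteq> 0 \<or> Re b - Re a \<noteq> 0"
proof -
  show AB: "Im a - Im b \<noteq> 0 \<or> Re b - Re a \<noteq> 0" using ab by (auto simp: complex_eq_iff)
  let ?A = "Im a - Im b" and ?B = "Re b - Re a"
  let ?C = "?A*Re a + ?B*Im a"
  have sub: "line_through a b \<subseteq> lineR ?A ?B ?C"
  proof
    fix z assume "z \<in> line_through a b"
    then obtain t where t: "Re z = Re a + t*(Re b - Re a)" "Im z = Im a + t*(Im b - Im a)"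
      unfolding mem_line_through by blast
    show "z \<in> lineR ?A ?B ?C" unfolding lineR_def mem_Collect_eq t by (simp add: algebra_simps)
  qed
  let ?n = "?A\<^sup>2+?B\<^sup>2"
  have ne: "Complex (?C*?A/?n) (?C*?B/?n) \<noteq> Complex (?C*?A/?n - ?B) (?C*?B/?n + ?A)"
    using AB by auto
  show "line_through a b = lineR ?A ?B ?C"
    using line_sub_eq[OF ab ne sub[unfolded lineR_line[OF AB]]] lineR_line[OF AB] by simp
qed

lemma dist_complex_sqrt: "dist z (w::complex) = sqrt ((Re z - Re w)\<^sup>2 + (Im z - Im w)\<^sup>2)"
  by (simp add: dist_norm norm_complex_def)

lemma infdist_lineR:
  assumes AB: "A \<noteq> 0 \<or> B \<noteq> 0"
  shows "infdist z (lineR A B C) = \<bar>A*Re z + B*Im z - C\<bar> / sqrt (A\<^sup>2+B\<^sup>2)"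
proof -
  define n where "n = A\<^sup>2+B\<^sup>2"
  have npos: "n > 0" using sumsq_pos[OF AB] n_def by simp
  define f where "f = A*Re z + B*Im z - C"
  define w where "w = Complex (Re z - f*A/n) (Im z - f*B/n)"
  have "A * Re w + B * Im w = A*Re z + B*Im z - f*(A*A+B*B)/n"
    unfolding w_def using npos by (simp add: field_simps)
  also have "A*A+B*B = n" unfolding n_def by (simp add: power2_eq_square)
  also have "A*Re z + B*Im z - f*n/n = A*Re z + B*Im z - f" using npos by simp
  also have "\<dots> = C" unfolding f_def by simp
  finally have wL: "w \<in> lineR A B C" by (simp add: lineR_def)
  have "dist z w = sqrt ((f*A/n)\<^sup>2 + (f*B/n)\<^sup>2)" unfolding dist_complex_sqrt w_def by simp
  also have "(f*A/n)\<^sup>2 + (f*B/n)\<^sup>2 = f\<^sup>2 / n"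
  proof -
    have "(f*A/n)\<^sup>2 + (f*B/n)\<^sup>2 = f\<^sup>2 * (A\<^sup>2+B\<^sup>2) / n\<^sup>2"
      by (simp add: power_divide power_mult_distrib add_divide_distrib distrib_left)
    also have "\<dots> = f\<^sup>2/n" using npos unfolding n_def[symmetric] by (simp add: power2_eq_square)
    finally show ?thesis .
  qed
  also have "sqrt (f\<^sup>2 / n) = \<bar>f\<bar> / sqrt n" by (simp add: real_sqrt_divide)
  finally have dw: "dist z w = \<bar>f\<bar> / sqrt n" .
  have lower: "\<bar>f\<bar> / sqrt n \<le> dist z v" if v: "v \<in> lineR A B C" for v
  proof -
    have fv: "f = A*(Re z - Re v) + B*(Im z - Im v)" using v unfolding f_def lineR_def
      by (simp add: algebra_simps)
    define q where "q = (Re z - Re v)\<^sup>2 + (Im z - Im v)\<^sup>2"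
    have "n*q - f\<^sup>2 = (A*(Im z - Im v) - B*(Re z - Re v))\<^sup>2" unfolding fv n_def q_def
      by (simp add: power2_eq_square algebra_simps)
    then have "f\<^sup>2 \<le> n*q" by (metis diff_ge_0_iff_ge zero_le_power2)
    then have "sqrt (f\<^sup>2) \<le> sqrt (n*q)" by (rule real_sqrt_le_mono)
    then have "\<bar>f\<bar> \<le> sqrt n * sqrt q" by (simp add: real_sqrt_mult)
    then have "\<bar>f\<bar> / sqrt n \<le> sqrt q" using npos by (simp add: divide_le_eq mult.commute)
    then show ?thesis unfolding q_def dist_complex_sqrt .
  qed
  have ne: "lineR A B C \<noteq> {}" using wL by blast
  have "infdist z (lineR A B C) = \<bar>f\<bar> / sqrt n"
  proof (rule antisym)
    show "infdist z (lineR A B C) \<le> \<bar>f\<bar> / sqrt n" using infdist_le[OF wL, of z] dw by simp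
    show "\<bar>f\<bar> / sqrt n \<le> infdist z (lineR A B C)"
      unfolding infdist_notempty[OF ne] by (rule cINF_greatest[OF ne lower])
  qed
  then show ?thesis unfolding f_def n_def .
qed



definition pyth :: "real set \<Rightarrow> bool" where
  "pyth S \<longleftrightarrow> 0 \<in> S \<and> 1 \<in> S \<and> (\<forall>x\<in>S. \<forall>y\<in>S. x+y \<in> S \<and> x*y \<in> S \<and> sqrt (x\<^sup>2+y\<^sup>2) \<in> S)
      \<and> (\<forall>x\<in>S. -x \<in> S \<and> inverse x \<in> S)"

definition PS :: "real set \<Rightarrow> complex set" where
  "PS S = {z. Re z \<in> S \<and> Im z \<in> S}"

definition Lfam :: "real set \<Rightarrow> complex set set" where
  "Lfam S = {lineR A B C | A B C. (A \<noteq> 0 \<or> B \<noteq> 0) \<and> A \<in> S \<and> B \<in> S \<and> C \<in> S}"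

context
  fixes S assumes S: "pyth S"
begin

lemma S0: "0 \<in> S" and S1: "1 \<in> S" using S by (auto simp: pyth_def)
lemma Sadd: "x \<in> S \<Longrightarrow> y \<in> S \<Longrightarrow> x + y \<in> S" using S by (auto simp: pyth_def)
lemma Smult: "x \<in> S \<Longrightarrow> y \<in> S \<Longrightarrow> x * y \<in> S" using S by (auto simp: pyth_def)
lemma Ssqrt: "x \<in> S \<Longrightarrow> y \<in> S \<Longrightarrow> sqrt (x\<^sup>2+y\<^sup>2) \<in> S" using S by (auto simp: pyth_def)
lemma Sminus: "x \<in> S \<Longrightarrow> -x \<in> S" using S by (auto simp: pyth_def)
lemma Sinv: "x \<in> S \<Longrightarrow> inverse x \<in> S" using S by (auto simp: pyth_def)
lemma Sdiff: "x \<in> S \<Longrightarrow> y \<in> S \<Longrightarrow> x - y \<in> S"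
  using Sadd[of x "-y"] Sminus[of y] by simp
lemma Sdiv: "x \<in> S \<Longrightarrow> y \<in> S \<Longrightarrow> x / y \<in> S"
  using Smult[of x "inverse y"] Sinv[of y] by (simp add: divide_inverse)
lemma Spow2: "x \<in> S \<Longrightarrow> x\<^sup>2 \<in> S" using Smult[of x x] by (simp add: power2_eq_square)
lemma S2: "2 \<in> S" using Sadd[OF S1 S1] by simp

lemmas Scl = S0 S1 S2 Sadd Smult Sminus Sinv Sdiff Sdiv Spow2

lemma lfam_pts:
  assumes "L \<in> Lfam S"
  shows "\<exists>a b. a \<noteq> b \<and> a \<in> PS S \<and> b \<in> PS S \<and> L = line_through a b"
proof -
  obtain A B C where L: "L = lineR A B C" and AB: "A \<noteq> 0 \<or> B \<noteq> 0" and inS: "A \<in> S" "B \<in> S" "C \<in> S"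
    using assms unfolding Lfam_def by blast
  let ?n = "A\<^sup>2+B\<^sup>2"
  have ne: "Complex (C*A/?n) (C*B/?n) \<noteq> Complex (C*A/?n - B) (C*B/?n + A)"
    using AB by auto
  show ?thesis
    by (rule exI, rule exI, rule conjI[OF ne], unfold PS_def L lineR_line[OF AB])
      (simp add: inS Scl)
qed

lemma lfam_is_line: "L \<in> Lfam S \<Longrightarrow> is_line L"
  using lfam_pts unfolding is_line_def by blast

lemma inter_in:
  assumes L1: "L1 \<in> Lfam S" and L2: "L2 \<in> Lfam S" and I: "L1 \<inter> L2 = {p}"
  shows "p \<in> PS S"
proof -
  obtain A1 B1 C1 where L1e: "L1 = lineR A1 B1 C1" and AB1: "A1 \<noteq> 0 \<or> B1 \<noteq> 0"
    and in1: "A1 \<in> S" "B1 \<in> S" "C1 \<in> S"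
    using L1 unfolding Lfam_def by blast
  obtain A2 B2 C2 where L2e: "L2 = lineR A2 B2 C2"
    and in2: "A2 \<in> S" "B2 \<in> S" "C2 \<in> S"
    using L2 unfolding Lfam_def by blast
  have e1: "A1 * Re p + B1 * Im p = C1" and e2: "A2 * Re p + B2 * Im p = C2"
    using I unfolding L1e L2e lineR_def by auto
  define D where "D = A1*B2 - A2*B1"
  show ?thesis
  proof (cases "D = 0")
    case True
    define p' where "p' = p + Complex (-B1) A1"
    have "A1 * Re p' + B1 * Im p' = C1" unfolding p'_def using e1 by (simp add: algebra_simps)
    moreover have "A2 * Re p' + B2 * Im p' = C2" unfolding p'_def using e2 True D_def
      by (simp add: algebra_simps)
    ultimately have "p' \<in> L1 \<inter> L2" unfolding L1e L2e lineR_def by simp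
    then have "p' = p" using I by blast
    then show ?thesis using AB1 unfolding p'_def by (simp add: complex_eq_iff)
  next
    case False
    have "Re p * D = C1*B2 - C2*B1" unfolding D_def
      using arg_cong[OF e1, of "\<lambda>x. x*B2"] arg_cong[OF e2, of "\<lambda>x. x*B1"]
      by (simp add: algebra_simps)
    then have x: "Re p = (C1*B2 - C2*B1)/D" using False by (simp add: field_simps)
    have "Im p * D = A1*C2 - A2*C1" unfolding D_def
      using arg_cong[OF e1, of "\<lambda>x. x*A2"] arg_cong[OF e2, of "\<lambda>x. x*A1"]
      by (simp add: algebra_simps)
    then have y: "Im p = (A1*C2 - A2*C1)/D" using False by (simp add: field_simps)
    show ?thesis unfolding PS_def mem_Collect_eq x y D_def by (simp add: in1 in2 Scl)
  qed
qed

lemma line_in: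
  assumes "p \<in> PS S" "q \<in> PS S" "p \<noteq> q"
  shows "line_through p q \<in> Lfam S"
  unfolding line_through_lineR(1)[OF assms(3)] Lfam_def
  using line_through_lineR(2)[OF assms(3)] assms(1,2) unfolding PS_def
  by (blast intro: Scl)

lemma perp_eq:
  assumes "p \<noteq> q"
  shows "perp_bisector p q = lineR (2*(Re q - Re p)) (2*(Im q - Im p))
                                   ((Re q)\<^sup>2 + (Im q)\<^sup>2 - (Re p)\<^sup>2 - (Im p)\<^sup>2)"
proof (rule set_eqI)
  fix z
  have "((Re z - Re p)\<^sup>2 + (Im z - Im p)\<^sup>2) - ((Re z - Re q)\<^sup>2 + (Im z - Im q)\<^sup>2)
       = (2*(Re q - Re p)) * Re z + (2*(Im q - Im p)) * Im z - ((Re q)\<^sup>2 + (Im q)\<^sup>2 - (Re p)\<^sup>2 - (Im p)\<^sup>2)"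
    by (simp add: power2_eq_square algebra_simps)
  then show "z \<in> perp_bisector p q \<longleftrightarrow> z \<in> lineR (2*(Re q - Re p)) (2*(Im q - Im p))
                                   ((Re q)\<^sup>2 + (Im q)\<^sup>2 - (Re p)\<^sup>2 - (Im p)\<^sup>2)"
    unfolding perp_bisector_def lineR_def mem_Collect_eq dist_complex_sqrt real_sqrt_eq_iff
    by linarith
qed

lemma perp_in:
  assumes "p \<in> PS S" "q \<in> PS S" "p \<noteq> q"
  shows "perp_bisector p q \<in> Lfam S"
proof -
  have "2*(Re q - Re p) \<noteq> 0 \<or> 2*(Im q - Im p) \<noteq> 0" using assms(3) by (auto simp: complex_eq_iff)
  then show ?thesis unfolding perp_eq[OF assms(3)] Lfam_def using assms(1,2) unfolding PS_def
    by (blast intro: Scl)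
qed

end


lemma refl_same:
  assumes ab: "a \<noteq> b" and ab': "a' \<noteq> b'" and eq: "line_through a b = line_through a' b'"
  shows "reflect_across a b = reflect_across a' b'"
proof -
  have "a' \<in> line_through a' b'" "b' \<in> line_through a' b'"
    unfolding line_through_def by (auto intro: exI[of _ 0] exI[of _ 1])
  then have "a' \<in> line_through a b" "b' \<in> line_through a b" using eq by auto
  then obtain t1 t2 where t1: "a' = a + complex_of_real t1 * (b - a)"
    and t2: "b' = a + complex_of_real t2 * (b - a)"
    unfolding line_through_def by blast
  define d where "d = b - a"
  have d: "d \<noteq> 0" "cnj d \<noteq> 0" using ab d_def by auto
  have "t1 \<noteq> t2" using ab' t1 t2 by auto
  then have tt: "complex_of_real (t2 - t1) \<noteq> 0" by simp
  have bd: "b' - a' = complex_of_real (t2 - t1) * d" unfolding t1 t2 d_def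
    by (simp add: algebra_simps)
  have w: "(b' - a') / cnj (b' - a') = d / cnj d" unfolding bd using tt d by simp
  show ?thesis
  proof
    fix z
    have "reflect_across a' b' z = a' + (d / cnj d) * cnj (z - a')"
      unfolding reflect_across_def w ..
    also have "\<dots> = a + complex_of_real t1 * d + (d / cnj d) * (cnj (z - a) - complex_of_real t1 * cnj d)"
      unfolding t1 d_def by simp
    also have "\<dots> = a + (d / cnj d) * cnj (z - a)" using d by (simp add: field_simps)
    finally show "reflect_across a b z = reflect_across a' b' z"
      unfolding reflect_across_def d_def by simp
  qed
qed

definition rwr :: "complex \<Rightarrow> complex \<Rightarrow> real" where
  "rwr a b = ((Re b - Re a)\<^sup>2 - (Im b - Im a)\<^sup>2) / ((Re b - Re a)\<^sup>2 + (Im b - Im a)\<^sup>2)"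
definition rwi :: "complex \<Rightarrow> complex \<Rightarrow> real" where
  "rwi a b = 2*(Re b - Re a)*(Im b - Im a) / ((Re b - Re a)\<^sup>2 + (Im b - Im a)\<^sup>2)"

lemma refl_comp:
  assumes ab: "a \<noteq> b"
  shows "Re (reflect_across a b z) = Re a + rwr a b*(Re z - Re a) + rwi a b*(Im z - Im a)"
    and "Im (reflect_across a b z) = Im a + rwi a b*(Re z - Re a) - rwr a b*(Im z - Im a)"
    and "(rwr a b)\<^sup>2 + (rwi a b)\<^sup>2 = 1"
proof -
  define u where "u = Re b - Re a"
  define v where "v = Im b - Im a"
  have w: "(b - a) / cnj (b - a) = Complex (rwr a b) (rwi a b)"
    unfolding rwr_def rwi_def by (simp add: complex_eq_iff Re_divide Im_divide power2_eq_square algebra_simps)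
  show "Re (reflect_across a b z) = Re a + rwr a b*(Re z - Re a) + rwi a b*(Im z - Im a)"
    unfolding reflect_across_def w by (simp add: algebra_simps)
  show "Im (reflect_across a b z) = Im a + rwi a b*(Re z - Re a) - rwr a b*(Im z - Im a)"
    unfolding reflect_across_def w by (simp add: algebra_simps)
  have m: "u\<^sup>2 + v\<^sup>2 \<noteq> 0" using ab unfolding u_def v_def by (auto simp: complex_eq_iff)
  have "(rwr a b)\<^sup>2 + (rwi a b)\<^sup>2 = ((u\<^sup>2 - v\<^sup>2)\<^sup>2 + (2*u * v)\<^sup>2) / (u\<^sup>2+v\<^sup>2)\<^sup>2"
    unfolding rwr_def rwi_def u_def[symmetric] v_def[symmetric] by (simp add: power_divide add_divide_distrib)
  also have "(u\<^sup>2 - v\<^sup>2)\<^sup>2 + (2*u * v)\<^sup>2 = (u\<^sup>2+v\<^sup>2)\<^sup>2" by (simp add: power2_eq_square algebra_simps)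
  finally show "(rwr a b)\<^sup>2 + (rwi a b)\<^sup>2 = 1" using m by simp
qed



context
  fixes S assumes S: "pyth S"
begin

lemmas Scl' = Scl[OF S]

lemma refl_image:
  assumes a: "a \<in> PS S" and b: "b \<in> PS S" and ab: "a \<noteq> b" and L2: "L2 \<in> Lfam S"
  shows "reflect_across a b ` L2 \<in> Lfam S"
proof -
  obtain A B C where L2e: "L2 = lineR A B C" and AB: "A \<noteq> 0 \<or> B \<noteq> 0"
    and inS: "A \<in> S" "B \<in> S" "C \<in> S"
    using L2 unfolding Lfam_def by blast
  let ?R = "reflect_across a b"
  let ?wr = "rwr a b" and ?wi = "rwi a b"
  note rc = refl_comp[OF ab]
  have inv: "?R (?R z) = z" for z
  proof -
    have "Re (?R (?R z)) = Re a + (?wr\<^sup>2 + ?wi\<^sup>2) * (Re z - Re a)"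
      unfolding rc(1,2) by (simp add: power2_eq_square algebra_simps)
    moreover have "Im (?R (?R z)) = Im a + (?wr\<^sup>2 + ?wi\<^sup>2) * (Im z - Im a)"
      unfolding rc(1,2) by (simp add: power2_eq_square algebra_simps)
    ultimately show ?thesis unfolding rc(3) by (simp add: complex_eq_iff)
  qed
  have img: "?R ` L2 = {z. ?R z \<in> L2}"
  proof (rule set_eqI, rule iffI)
    fix z assume "z \<in> ?R ` L2"
    then obtain y where "y \<in> L2" "z = ?R y" by blast
    then show "z \<in> {z. ?R z \<in> L2}" using inv by simp
  next
    fix z assume "z \<in> {z. ?R z \<in> L2}"
    then have "?R z \<in> L2" by simp
    then show "z \<in> ?R ` L2" using inv[of z] by (metis image_eqI)
  qed
  define A' where "A' = A * ?wr + B * ?wi"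
  define B' where "B' = A * ?wi - B * ?wr"
  define C' where "C' = C - A * Re a - B * Im a + A' * Re a + B' * Im a"
  have eq: "{z. ?R z \<in> L2} = lineR A' B' C'"
  proof (rule set_eqI)
    fix z
    have "A * Re (?R z) + B * Im (?R z) = (A' * Re z + B' * Im z) - C' + C"
      unfolding rc(1,2) A'_def B'_def C'_def by (simp add: algebra_simps)
    then show "z \<in> {z. ?R z \<in> L2} \<longleftrightarrow> z \<in> lineR A' B' C'"
      unfolding L2e lineR_def by auto
  qed
  have AB': "A' \<noteq> 0 \<or> B' \<noteq> 0"
  proof (rule ccontr)
    assume "\<not> (A' \<noteq> 0 \<or> B' \<noteq> 0)"
    then have z: "A' = 0" "B' = 0" by auto
    have "A = ?wr * A' + ?wi * B'" unfolding A'_def B'_def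
      using rc(3) by (simp add: power2_eq_square algebra_simps) (metis distrib_left mult.right_neutral)
    moreover have "B = ?wi * A' - ?wr * B'" unfolding A'_def B'_def
      using rc(3) by (simp add: power2_eq_square algebra_simps) (metis distrib_left mult.right_neutral)
    ultimately show False using z AB by simp
  qed
  have wS: "?wr \<in> S" "?wi \<in> S" using a b unfolding PS_def rwr_def rwi_def
    by (auto intro!: Scl')
  have "lineR A' B' C' \<in> Lfam S" unfolding Lfam_def A'_def B'_def C'_def
    using AB' inS wS a b unfolding PS_def A'_def B'_def
    by (auto intro!: exI Scl')
  then show ?thesis unfolding img eq .
qed

end


context
  fixes S assumes S: "pyth S"
begin

lemmas Scl'' = Scl[OF S]

lemma bis_in:
  assumes L1: "L1 \<in> Lfam S" and L2: "L2 \<in> Lfam S" and ne: "L1 \<noteq> L2" and L: "is_line L"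
    and sub: "L \<subseteq> {z. infdist z L1 = infdist z L2}"
  shows "L \<in> Lfam S"
proof -
  obtain A1 B1 C1 where L1e: "L1 = lineR A1 B1 C1" and AB1: "A1 \<noteq> 0 \<or> B1 \<noteq> 0"
    and in1: "A1 \<in> S" "B1 \<in> S" "C1 \<in> S"
    using L1 unfolding Lfam_def by blast
  obtain A2 B2 C2 where L2e: "L2 = lineR A2 B2 C2" and AB2: "A2 \<noteq> 0 \<or> B2 \<noteq> 0"
    and in2: "A2 \<in> S" "B2 \<in> S" "C2 \<in> S"
    using L2 unfolding Lfam_def by blast
  obtain p q where pq: "p \<noteq> q" and Le: "L = line_through p q" using L unfolding is_line_def by blast
  define n1 where "n1 = sqrt (A1\<^sup>2+B1\<^sup>2)"
  define n2 where "n2 = sqrt (A2\<^sup>2+B2\<^sup>2)"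
  have n1: "n1 > 0" unfolding n1_def using sumsq_pos[OF AB1] by simp
  have n2: "n2 > 0" unfolding n2_def using sumsq_pos[OF AB2] by simp
  have n1S: "n1 \<in> S" unfolding n1_def by (rule Ssqrt[OF S in1(1,2)])
  have n2S: "n2 \<in> S" unfolding n2_def by (rule Ssqrt[OF S in2(1,2)])
  define f1 where "f1 z = A1 * Re z + B1 * Im z - C1" for z
  define f2 where "f2 z = A2 * Re z + B2 * Im z - C2" for z
  define As where "As s = A1/n1 - s*A2/n2" for s
  define Bs where "Bs s = B1/n1 - s*B2/n2" for s
  define Cs where "Cs s = C1/n1 - s*C2/n2" for s
  define g where "g s z = f1 z / n1 - s * f2 z / n2" for s z
  have glin: "g s z = As s * Re z + Bs s * Im z - Cs s" for s z
    unfolding g_def As_def Bs_def Cs_def f1_def f2_def using n1 n2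
    by (simp add: field_simps)
  define zt where "zt t = p + complex_of_real t * (q - p)" for t
  have ztL: "zt t \<in> L" for t unfolding Le zt_def line_through_def by blast
  have alt: "g 1 z = 0 \<or> g (-1) z = 0" if "z \<in> L" for z
  proof -
    have "infdist z L1 = infdist z L2" using sub that by blast
    then have "\<bar>f1 z\<bar> / n1 = \<bar>f2 z\<bar> / n2"
      unfolding L1e L2e infdist_lineR[OF AB1] infdist_lineR[OF AB2] f1_def f2_def n1_def n2_def .
    then have "\<bar>f1 z / n1\<bar> = \<bar>f2 z / n2\<bar>" using n1 n2 by simp
    then have "f1 z / n1 = f2 z / n2 \<or> f1 z / n1 = - (f2 z / n2)" by arith
    then show ?thesis unfolding g_def by auto
  qed
  have key: "L \<in> Lfam S" if s: "s = 1 \<or> s = -1" and t12: "t1 \<noteq> t2"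
    and g1: "g s (zt t1) = 0" and g2: "g s (zt t2) = 0" for s t1 t2
  proof -
    define dx where "dx = Re q - Re p"
    define dy where "dy = Im q - Im p"
    have gt: "g s (zt t) = g s p + t * (As s * dx + Bs s * dy)" for t
      unfolding glin zt_def dx_def dy_def by (simp add: algebra_simps)
    have "(t1 - t2) * (As s * dx + Bs s * dy) = 0" using g1 g2 unfolding gt by (simp add: algebra_simps)
    then have sl: "As s * dx + Bs s * dy = 0" using t12 by simp
    then have gp: "g s p = 0" using g1 unfolding gt by simp
    have allz: "g s z = 0" if "z \<in> L" for z
    proof -
      from that obtain t where "z = zt t" unfolding Le zt_def line_through_def by blast
      then show ?thesis using gt sl gp by simp
    qed
    have sS: "s \<in> S" using s S1[OF S] Sminus[OF S S1[OF S]] by auto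
    have coefS: "As s \<in> S" "Bs s \<in> S" "Cs s \<in> S" unfolding As_def Bs_def Cs_def
      using in1 in2 n1S n2S sS by (auto intro!: Scl'')
    show ?thesis
    proof (cases "As s = 0 \<and> Bs s = 0")
      case True
      then have "Cs s = 0" using gp unfolding glin by simp
      then have g0: "g s z = 0" for z unfolding glin using True by simp
      have "L1 = L2"
      proof -
        have "f1 z = 0 \<longleftrightarrow> f2 z = 0" for z
        proof -
          have "f1 z / n1 = s * f2 z / n2" using g0[of z] unfolding g_def by simp
          then show ?thesis using n1 n2 s by (auto simp: field_simps)
        qed
        then show ?thesis unfolding L1e L2e lineR_def f1_def f2_def by auto
      qed
      then show ?thesis using ne by simp
    next
      case False
      then have AB: "As s \<noteq> 0 \<or> Bs s \<noteq> 0" by simp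
      have subL: "L \<subseteq> lineR (As s) (Bs s) (Cs s)" using allz unfolding glin lineR_def by auto
      let ?n = "(As s)\<^sup>2 + (Bs s)\<^sup>2"
      have ne2: "Complex (Cs s * As s/?n) (Cs s * Bs s/?n) \<noteq> Complex (Cs s * As s/?n - Bs s) (Cs s * Bs s/?n + As s)"
        using AB by auto
      have "L = lineR (As s) (Bs s) (Cs s)"
        using line_sub_eq[OF pq ne2] subL unfolding Le lineR_line[OF AB] by blast
      then show ?thesis unfolding Lfam_def using AB coefS by blast
    qed
  qed
  have h0: "g 1 (zt 0) = 0 \<or> g (-1) (zt 0) = 0" using alt ztL by blast
  have h1: "g 1 (zt 1) = 0 \<or> g (-1) (zt 1) = 0" using alt ztL by blast
  have h2: "g 1 (zt 2) = 0 \<or> g (-1) (zt 2) = 0" using alt ztL by blast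
  have d: "(0::real) \<noteq> 1" "(0::real) \<noteq> 2" "(1::real) \<noteq> 2" by auto
  show ?thesis using h0 h1 h2 key[of 1 0 1] key[of 1 0 2] key[of 1 1 2]
      key[of "-1" 0 1] key[of "-1" 0 2] key[of "-1" 1 2] d by blast
qed

lemma origami_pair_S: "origami_pair (PS S) (Lfam S)"
  unfolding origami_pair_def
proof (intro conjI ballI allI impI)
  show "is_line L" if "L \<in> Lfam S" for L using lfam_is_line[OF S that] .
  show "p \<in> PS S" if "L1 \<in> Lfam S" "L2 \<in> Lfam S" "L1 \<inter> L2 = {p}" for L1 L2 p
    using inter_in[OF S that] .
  show "line_through p q \<in> Lfam S" if "p \<in> PS S" "q \<in> PS S" "p \<noteq> q" for p q
    using line_in[OF S that] .
  show "perp_bisector p q \<in> Lfam S" if "p \<in> PS S" "q \<in> PS S" "p \<noteq> q" for p q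
    using perp_in[OF S that] .
  show "L \<in> Lfam S" if "L1 \<in> Lfam S" "L2 \<in> Lfam S"
    "L1 \<noteq> L2 \<and> is_line L \<and> L \<subseteq> {z. infdist z L1 = infdist z L2}" for L1 L2 L
    using bis_in that by blast
  show "reflect_across a b ` L2 \<in> Lfam S" if hh: "L1 \<in> Lfam S" "L2 \<in> Lfam S"
    "a \<noteq> b \<and> L1 = line_through a b" for L1 L2 a b
  proof -
    obtain a' b' where "a' \<noteq> b'" "a' \<in> PS S" "b' \<in> PS S" "L1 = line_through a' b'"
      using lfam_pts[OF S hh(1)] by blast
    then have "reflect_across a b = reflect_across a' b'" using refl_same hh(3) by metis
    then show ?thesis using refl_image[OF S] hh(2) \<open>a' \<noteq> b'\<close> \<open>a' \<in> PS S\<close> \<open>b' \<in> PS S\<close> by simp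
  qed
qed

lemma origami_numbers_sub: "origami_numbers \<subseteq> S"
proof
  have cl: "origami_closed (PS S)" unfolding origami_closed_def using origami_pair_S by blast
  have "0 \<in> PS S" "\<i> \<in> PS S" unfolding PS_def using S0[OF S] S1[OF S] by auto
  then have sub: "origami_points \<subseteq> PS S" unfolding origami_points_def using cl by blast
  fix x assume "x \<in> origami_numbers"
  then obtain v1 v2 where v: "v1 \<in> PS S" "v2 \<in> PS S" and d: "\<bar>x\<bar> = dist v1 v2"
    unfolding origami_numbers_def using sub by blast
  have "dist v1 v2 \<in> S" unfolding dist_complex_sqrt using v unfolding PS_def
    by (auto intro!: Ssqrt[OF S] Scl'')
  then have "\<bar>x\<bar> \<in> S" using d by simp
  then show "x \<in> S" by (cases "x \<ge> 0") (auto dest: Sminus[OF S])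
qed

end


definition goodK :: "complex set \<Rightarrow> bool" where
  "goodK K \<longleftrightarrow> is_subfield K \<and> (\<forall>z\<in>K. \<exists>w\<in>K. w\<^sup>2 = z)"

lemma F_sqrt_iff: "z \<in> F_sqrt \<longleftrightarrow> (\<forall>K. goodK K \<longrightarrow> z \<in> K)"
  unfolding F_sqrt_def goodK_def by blast

lemma F_add: "x \<in> F_sqrt \<Longrightarrow> y \<in> F_sqrt \<Longrightarrow> x + y \<in> F_sqrt"
  and F_diff: "x \<in> F_sqrt \<Longrightarrow> y \<in> F_sqrt \<Longrightarrow> x - y \<in> F_sqrt"
  and F_mult: "x \<in> F_sqrt \<Longrightarrow> y \<in> F_sqrt \<Longrightarrow> x * y \<in> F_sqrt"
  and F_0: "0 \<in> F_sqrt" and F_1: "1 \<in> F_sqrt"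
  unfolding F_sqrt_iff goodK_def is_subfield_def by auto

lemma F_inv: "x \<in> F_sqrt \<Longrightarrow> inverse x \<in> F_sqrt"
  unfolding F_sqrt_iff goodK_def is_subfield_def by (metis inverse_zero)

lemma F_sqrt_real:
  assumes t: "t \<ge> 0" and tin: "complex_of_real t \<in> F_sqrt"
  shows "complex_of_real (sqrt t) \<in> F_sqrt"
  unfolding F_sqrt_iff
proof (intro allI impI)
  fix K assume K: "goodK K"
  let ?s = "complex_of_real (sqrt t)"
  have "complex_of_real t \<in> K" using tin K F_sqrt_iff by blast
  then obtain w where w: "w \<in> K" "w\<^sup>2 = complex_of_real t" using K unfolding goodK_def by blast
  have s2: "?s\<^sup>2 = complex_of_real t" using t by (simp flip: of_real_power)
  have "(w - ?s) * (w + ?s) = 0" using w(2) s2 by (simp add: algebra_simps power2_eq_square)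
  then have "w = ?s \<or> w = - ?s" by (auto simp: add_eq_0_iff)
  moreover have "0 - w \<in> K" using K w(1) unfolding goodK_def is_subfield_def by blast
  ultimately show "?s \<in> K" using w(1) by auto
qed

definition KR :: "real set" where "KR = {x. complex_of_real x \<in> F_sqrt}"

lemma pyth_KR: "pyth KR"
  unfolding pyth_def KR_def mem_Collect_eq
proof (intro conjI ballI)
  show "complex_of_real 0 \<in> F_sqrt" using F_0 by simp
  show "complex_of_real 1 \<in> F_sqrt" using F_1 by simp
  fix x y assume "x \<in> {x. complex_of_real x \<in> F_sqrt}" and "y \<in> {x. complex_of_real x \<in> F_sqrt}"
  then have x: "complex_of_real x \<in> F_sqrt" and y: "complex_of_real y \<in> F_sqrt" by auto
  show "complex_of_real (x + y) \<in> F_sqrt" using F_add[OF x y] by simp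
  show "complex_of_real (x * y) \<in> F_sqrt" using F_mult[OF x y] by simp
  have "complex_of_real (x\<^sup>2 + y\<^sup>2) \<in> F_sqrt"
    using F_add[OF F_mult[OF x x] F_mult[OF y y]] by (simp add: power2_eq_square)
  then show "complex_of_real (sqrt (x\<^sup>2 + y\<^sup>2)) \<in> F_sqrt" by (rule F_sqrt_real[rotated]) simp
next
  fix x assume "x \<in> {x. complex_of_real x \<in> F_sqrt}"
  then have x: "complex_of_real x \<in> F_sqrt" by auto
  show "complex_of_real (- x) \<in> F_sqrt" using F_diff[OF F_0 x] by simp
  show "complex_of_real (inverse x) \<in> F_sqrt" using F_inv[OF x] by (simp add: of_real_inverse)
qed

lemma witness_KR: "sqrt (1 + sqrt 2) \<in> KR"
proof -
  have "complex_of_real 2 \<in> F_sqrt" using F_add[OF F_1 F_1] by simp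
  then have "complex_of_real (sqrt 2) \<in> F_sqrt" by (rule F_sqrt_real[rotated]) simp
  then have "complex_of_real (1 + sqrt 2) \<in> F_sqrt" using F_add[OF F_1] by simp
  then have "complex_of_real (sqrt (1 + sqrt 2)) \<in> F_sqrt" by (rule F_sqrt_real[rotated]) simp
  then show ?thesis unfolding KR_def by simp
qed

lemma origami_sub_KR: "origami_numbers \<subseteq> KR"
  by (rule origami_numbers_sub[OF pyth_KR])



lemma sqrt2_irrat: "sqrt 2 \<notin> \<rat>"
proof
  assume "sqrt 2 \<in> \<rat>"
  then obtain m n :: nat where n: "n \<noteq> 0" and sq: "\<bar>sqrt 2\<bar> = m / n" and cop: "coprime m n"
    by (rule Rats_abs_nat_div_natE)
  have "real m = sqrt 2 * n" using sq n by (simp add: field_simps)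
  then have "real (m\<^sup>2) = 2 * real (n\<^sup>2)" by (simp add: power_mult_distrib)
  then have eq: "m\<^sup>2 = 2 * n\<^sup>2" by linarith
  then have "even (m\<^sup>2)" by simp
  then have "even m" by simp
  then obtain k where k: "m = 2 * k" by blast
  then have "n\<^sup>2 = 2 * k\<^sup>2" using eq by (simp add: power2_eq_square)
  then have "even (n\<^sup>2)" by simp
  then have "even n" by simp
  with \<open>even m\<close> cop show False using coprime_common_divisor[of m n 2] by simp
qed

definition validG :: "(real \<times> real) set \<Rightarrow> bool" where
  "validG G \<longleftrightarrow> (\<forall>x y z. (x,y)\<in>G \<longrightarrow> (x,z)\<in>G \<longrightarrow> y = z) \<and> (1,1) \<in> G \<and>
     (\<forall>x y u v. (x,y)\<in>G \<longrightarrow> (u,v)\<in>G \<longrightarrow> (x+u, y+v)\<in>G \<and> (x*u, y * v)\<in>G) \<and>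
     (\<forall>x y. (x,y)\<in>G \<longrightarrow> (-x,-y)\<in>G \<and> (inverse x, inverse y)\<in>G)"

context fixes G assumes G: "validG G"
begin

lemma vfun: "(x,y)\<in>G \<Longrightarrow> (x,z)\<in>G \<Longrightarrow> y = z" using G unfolding validG_def by blast
lemma v1: "(1,1)\<in>G" using G unfolding validG_def by blast
lemma vadd: "(x,y)\<in>G \<Longrightarrow> (u,v)\<in>G \<Longrightarrow> (x+u, y+v)\<in>G" using G unfolding validG_def by blast
lemma vmult: "(x,y)\<in>G \<Longrightarrow> (u,v)\<in>G \<Longrightarrow> (x*u, y * v)\<in>G" using G unfolding validG_def by blast
lemma vneg: "(x,y)\<in>G \<Longrightarrow> (-x, -y)\<in>G" using G unfolding validG_def by blast
lemma vinv: "(x,y)\<in>G \<Longrightarrow> (inverse x, inverse y)\<in>G" using G unfolding validG_def by blast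
lemma v0: "(0,0)\<in>G" using vadd[OF v1 vneg[OF v1]] by simp
lemma vdiff: "(x,y)\<in>G \<Longrightarrow> (u,v)\<in>G \<Longrightarrow> (x-u, y-v)\<in>G" using vadd[OF _ vneg, of x y u v] by simp
lemma vdiv: "(x,y)\<in>G \<Longrightarrow> (u,v)\<in>G \<Longrightarrow> (x/u, y/v)\<in>G"
  using vmult[OF _ vinv, of x y u v] by (simp add: divide_inverse)
lemma vnz: assumes "(x,y)\<in>G" "x \<noteq> 0" shows "y \<noteq> 0"
proof
  assume "y = 0"
  have "(x * inverse x, y * inverse y) \<in> G" using vmult[OF assms(1) vinv[OF assms(1)]] .
  then have "(1, 0) \<in> G" using assms(2) \<open>y = 0\<close> by simp
  then show False using vfun[OF _ v1] by force
qed

lemma ext_valid: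
  assumes r: "r \<notin> Domain G" and c: "(r*r, c) \<in> G" and r': "r'*r' = c"
  defines "G' \<equiv> {(x + y*r, x' + y'*r') | x x' y y'. (x,x')\<in>G \<and> (y,y')\<in>G}"
  shows "validG G'" "G \<subseteq> G'" "(r, r') \<in> G'"
proof -
  have mem: "(x + y*r, x' + y'*r') \<in> G'" if "(x,x')\<in>G" "(y,y')\<in>G" for x x' y y'
    unfolding G'_def using that by blast
  show "G \<subseteq> G'"
  proof
    fix p assume "p \<in> G"
    then obtain x x' where "p = (x,x')" "(x,x') \<in> G" by (cases p) auto
    then show "p \<in> G'" using mem[OF _ v0, of x x'] by simp
  qed
  show "(r, r') \<in> G'" using mem[OF v0 v1] by simp
  have notr: "y1 = y2" if "(x1,x1')\<in>G" "(y1,y1')\<in>G" "(x2,x2')\<in>G" "(y2,y2')\<in>G"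
      "x1 + y1*r = x2 + y2*r" for x1 x1' y1 y1' x2 x2' y2 y2'
  proof (rule ccontr)
    assume ne: "y1 \<noteq> y2"
    have "r = (x2 - x1)/(y1 - y2)" using ne that(5) by (simp add: field_simps)
    moreover have "((x2 - x1)/(y1 - y2), (x2' - x1')/(y1' - y2')) \<in> G"
      using vdiv[OF vdiff[OF that(3,1)] vdiff[OF that(2,4)]] .
    ultimately show False using r by force
  qed
  show "validG G'"
    unfolding validG_def
  proof (intro conjI allI impI)
    fix a b b2 assume h1: "(a,b)\<in>G'" and h2: "(a,b2)\<in>G'"
    obtain x1 x1' y1 y1' where e1: "a = x1 + y1*r" "b = x1' + y1'*r'" "(x1,x1')\<in>G" "(y1,y1')\<in>G"
      using h1 unfolding G'_def by blast
    obtain x2 x2' y2 y2' where e2: "a = x2 + y2*r" "b2 = x2' + y2'*r'" "(x2,x2')\<in>G" "(y2,y2')\<in>G"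
      using h2 unfolding G'_def by blast
    have "y1 = y2" using notr[OF e1(3,4) e2(3,4)] e1(1) e2(1) by simp
    then have "x1 = x2" using e1(1) e2(1) by simp
    show "b = b2" using e1 e2 \<open>y1 = y2\<close> \<open>x1 = x2\<close> vfun by metis
  next
    show "(1,1) \<in> G'" using mem[OF v1 v0] by simp
  next
    fix a b u v assume h1: "(a,b)\<in>G'" and h2: "(u,v)\<in>G'"
    obtain x1 x1' y1 y1' where e1: "a = x1 + y1*r" "b = x1' + y1'*r'" "(x1,x1')\<in>G" "(y1,y1')\<in>G"
      using h1 unfolding G'_def by blast
    obtain x2 x2' y2 y2' where e2: "u = x2 + y2*r" "v = x2' + y2'*r'" "(x2,x2')\<in>G" "(y2,y2')\<in>G"
      using h2 unfolding G'_def by blast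
    show "(a+u, b+v) \<in> G'" using mem[OF vadd[OF e1(3) e2(3)] vadd[OF e1(4) e2(4)]]
      unfolding e1 e2 by (simp add: algebra_simps)
    have "(x1*x2 + (y1*y2)*(r*r), x1'*x2' + (y1'*y2')*c) \<in> G"
      using vadd[OF vmult[OF e1(3) e2(3)] vmult[OF vmult[OF e1(4) e2(4)] c]] .
    moreover have "(x1*y2 + y1*x2, x1'*y2' + y1'*x2') \<in> G"
      using vadd[OF vmult[OF e1(3) e2(4)] vmult[OF e1(4) e2(3)]] .
    ultimately have "((x1*x2 + (y1*y2)*(r*r)) + (x1*y2 + y1*x2)*r,
                      (x1'*x2' + (y1'*y2')*c) + (x1'*y2' + y1'*x2')*r') \<in> G'"
      by (rule mem)
    then show "(a*u, b * v) \<in> G'" unfolding e1 e2 r'[symmetric] by (simp add: algebra_simps)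
  next
    fix a b assume h1: "(a,b)\<in>G'"
    obtain x x' y y' where e1: "a = x + y*r" "b = x' + y'*r'" and xy: "(x,x')\<in>G" "(y,y')\<in>G"
      using h1 unfolding G'_def by blast
    show "(-a, -b) \<in> G'" using mem[OF vneg[OF xy(1)] vneg[OF xy(2)]] unfolding e1 by simp
    show "(inverse a, inverse b) \<in> G'"
    proof (cases "a = 0")
      case True
      have "y = 0" using notr[OF xy v0 v0] True e1 by simp
      then have "x = 0" using True e1 by simp
      have "y' = 0" using vfun[OF xy(2)] v0 \<open>y = 0\<close> by simp
      have "x' = 0" using vfun[OF xy(1)] v0 \<open>x = 0\<close> by simp
      show ?thesis using mem[OF v0 v0] True e1 \<open>x' = 0\<close> \<open>y' = 0\<close> by simp
    next
      case False
      define N where "N = x*x - y*y*(r*r)"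
      define N' where "N' = x'*x' - y'*y'*c"
      have NG: "(N, N') \<in> G" unfolding N_def N'_def
        using vdiff[OF vmult[OF xy(1) xy(1)] vmult[OF vmult[OF xy(2) xy(2)] c]] .
      have N0: "N \<noteq> 0"
      proof
        assume N0: "N = 0"
        show False
        proof (cases "y = 0")
          case True then show False using N0 False e1 unfolding N_def by simp
        next
          case yne: False
          have "(r - x/y) * (r + x/y) = 0" using N0 yne unfolding N_def
            by (simp add: field_simps)
          then have "r = x/y \<or> r = -(x/y)" by (auto simp: add_eq_0_iff)
          moreover have "(x/y, x'/y') \<in> G" using vdiv[OF xy] .
          moreover have "(-(x/y), -(x'/y')) \<in> G" using vneg[OF vdiv[OF xy]] .
          ultimately show False using r by force
        qed
      qed
      have N'0: "N' \<noteq> 0" using vnz[OF NG N0] .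
      have ia: "inverse a = x/N + (-y/N)*r"
      proof -
        have "a * (x/N + (-y/N)*r) = N/N" unfolding e1 N_def by (simp add: field_simps)
        then show ?thesis using N0 by (metis divide_self inverse_unique)
      qed
      have ib: "inverse b = x'/N' + (-y'/N')*r'"
      proof -
        have "b * (x'/N' + (-y'/N')*r') = N'/N'" unfolding e1 N'_def r'[symmetric]
          by (simp add: field_simps)
        then show ?thesis using N'0 by (metis divide_self inverse_unique)
      qed
      have "(x/N, x'/N') \<in> G" using vdiv[OF xy(1) NG] .
      moreover have "(-y/N, -y'/N') \<in> G" using vdiv[OF vneg[OF xy(2)] NG] by simp
      ultimately show ?thesis unfolding ia ib by (rule mem)
    qed
  qed
qed

end



definition G0 :: "(real \<times> real) set" where "G0 = {(q,q) | q. q \<in> \<rat>}"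

lemma valid_G0: "validG G0"
  unfolding validG_def G0_def by (auto intro: Rats_add Rats_mult Rats_minus_iff Rats_inverse)

lemma Domain_G0: "Domain G0 = \<rat>" unfolding G0_def by auto

definition G1 :: "(real \<times> real) set" where
  "G1 = {(x + y * sqrt 2, x' + y' * (- sqrt 2)) | x x' y y'. (x,x')\<in>G0 \<and> (y,y')\<in>G0}"

lemma G1_props: "validG G1" "(sqrt 2, - sqrt 2) \<in> G1"
proof -
  have r: "sqrt 2 \<notin> Domain G0" using sqrt2_irrat Domain_G0 by simp
  have c: "(sqrt 2 * sqrt 2, 2) \<in> G0" unfolding G0_def by auto
  have r': "(- sqrt 2) * (- sqrt 2) = 2" by simp
  show "validG G1" "(sqrt 2, - sqrt 2) \<in> G1"
    using ext_valid[OF valid_G0 r c r'] unfolding G1_def by auto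
qed

lemma chain_union_valid:
  assumes ne: "C \<noteq> {}" and v: "\<And>X. X \<in> C \<Longrightarrow> validG X" and ch: "chain\<^sub>\<subseteq> C"
  shows "validG (\<Union>C)"
proof -
  have big: "\<exists>Z\<in>C. X \<subseteq> Z \<and> Y \<subseteq> Z" if "X \<in> C" "Y \<in> C" for X Y
  proof -
    have "X \<subseteq> Y \<or> Y \<subseteq> X" using ch that unfolding chain_subset_def by blast
    then show ?thesis using that by auto
  qed
  obtain X0 where X0: "X0 \<in> C" using ne by blast
  show ?thesis unfolding validG_def
  proof (intro conjI allI impI)
    fix x y z assume "(x,y) \<in> \<Union>C" "(x,z) \<in> \<Union>C"
    then obtain X Y where "X \<in> C" "Y \<in> C" "(x,y) \<in> X" "(x,z) \<in> Y" by blast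
    then obtain Z where Z: "Z \<in> C" "(x,y) \<in> Z" "(x,z) \<in> Z" using big by blast
    show "y = z" using vfun[OF v[OF Z(1)] Z(2,3)] .
  next
    show "(1,1) \<in> \<Union>C" using v1[OF v[OF X0]] X0 by blast
  next
    fix x y u w assume "(x,y) \<in> \<Union>C" "(u,w) \<in> \<Union>C"
    then obtain X Y where "X \<in> C" "Y \<in> C" "(x,y) \<in> X" "(u,w) \<in> Y" by blast
    then obtain Z where Z: "Z \<in> C" "(x,y) \<in> Z" "(u,w) \<in> Z" using big by blast
    show "(x+u, y+w) \<in> \<Union>C" using vadd[OF v[OF Z(1)] Z(2,3)] Z(1) by blast
    show "(x*u, y*w) \<in> \<Union>C" using vmult[OF v[OF Z(1)] Z(2,3)] Z(1) by blast
  next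
    fix x y assume "(x,y) \<in> \<Union>C"
    then obtain X where X: "X \<in> C" "(x,y) \<in> X" by blast
    show "(-x, -y) \<in> \<Union>C" using vneg[OF v[OF X(1)] X(2)] X(1) by blast
    show "(inverse x, inverse y) \<in> \<Union>C" using vinv[OF v[OF X(1)] X(2)] X(1) by blast
  qed
qed

lemma exists_max: "\<exists>M. validG M \<and> G1 \<subseteq> M \<and> (\<forall>X. validG X \<and> G1 \<subseteq> X \<and> M \<subseteq> X \<longrightarrow> X = M)"
proof -
  let ?A = "{G. validG G \<and> G1 \<subseteq> G}"
  have "\<forall>C\<in>chains ?A. \<exists>U\<in>?A. \<forall>X\<in>C. X \<subseteq> U"
  proof
    fix C assume C: "C \<in> chains ?A"
    show "\<exists>U\<in>?A. \<forall>X\<in>C. X \<subseteq> U"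
    proof (cases "C = {}")
      case True then show ?thesis using G1_props(1) by auto
    next
      case False
      obtain X0 where X0: "X0 \<in> C" using False by blast
      have "validG (\<Union>C)" using chain_union_valid[OF False] C unfolding chains_def by blast
      moreover have "G1 \<subseteq> \<Union>C" using X0 C unfolding chains_def by blast
      ultimately show ?thesis by blast
    qed
  qed
  from Zorn_Lemma2[OF this] show ?thesis by blast
qed

lemma no_sqrt_neg: "\<not> (\<exists>w. w * w = 1 - sqrt (2::real))"
proof
  assume "\<exists>w. w * w = 1 - sqrt (2::real)"
  then obtain w where w: "w * w = 1 - sqrt (2::real)" by blast
  have "1 < sqrt (2::real)" by (simp add: real_less_rsqrt)
  moreover have "0 \<le> w * w" by simp
  ultimately show False using w by simp
qed

lemma strict_witness: "\<exists>S. pyth S \<and> sqrt (1 + sqrt 2) \<notin> S"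
proof -
  obtain M where M: "validG M" "G1 \<subseteq> M"
    and max0: "\<forall>X. validG X \<and> G1 \<subseteq> X \<and> M \<subseteq> X \<longrightarrow> X = M"
    using exists_max by (elim exE conjE)
  have max: "X = M" if "validG X" "G1 \<subseteq> X" "M \<subseteq> X" for X
    using max0 that by simp
  let ?S = "Domain M"
  have pS: "pyth ?S" unfolding pyth_def
  proof (intro conjI ballI)
    show "0 \<in> ?S" using v0[OF M(1)] by blast
    show "1 \<in> ?S" using v1[OF M(1)] by blast
    fix x y assume "x \<in> ?S" "y \<in> ?S"
    then obtain x' y' where xy: "(x,x') \<in> M" "(y,y') \<in> M" by blast
    show "x + y \<in> ?S" using vadd[OF M(1) xy] by blast
    show "x * y \<in> ?S" using vmult[OF M(1) xy] by blast
    show "sqrt (x\<^sup>2 + y\<^sup>2) \<in> ?S"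
    proof (rule ccontr)
      assume r: "sqrt (x\<^sup>2 + y\<^sup>2) \<notin> ?S"
      have c: "(sqrt (x\<^sup>2 + y\<^sup>2) * sqrt (x\<^sup>2 + y\<^sup>2), x'*x' + y'*y') \<in> M"
        using vadd[OF M(1) vmult[OF M(1) xy(1) xy(1)] vmult[OF M(1) xy(2) xy(2)]]
        by (simp add: power2_eq_square)
      have r': "sqrt (x'*x' + y'*y') * sqrt (x'*x' + y'*y') = x'*x' + y'*y'" by simp
      note E = ext_valid[OF M(1) r c r']
      let ?M' = "{(a + b * sqrt (x\<^sup>2 + y\<^sup>2), a' + b' * sqrt (x' * x' + y' * y')) |a a' b b'.
                  (a, a') \<in> M \<and> (b, b') \<in> M}"
      have "G1 \<subseteq> ?M'" using E(2) M(2) by (rule order_trans[rotated])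
      then have eqM: "?M' = M" using max[OF E(1) _ E(2)] by simp
      have "(sqrt (x\<^sup>2 + y\<^sup>2), sqrt (x' * x' + y' * y')) \<in> M" using E(3) unfolding eqM .
      then have "sqrt (x\<^sup>2 + y\<^sup>2) \<in> ?S" by (rule DomainI)
      then show False using r by contradiction
    qed
  next
    fix x assume "x \<in> ?S"
    then obtain x' where xx: "(x,x') \<in> M" by blast
    show "- x \<in> ?S" using vneg[OF M(1) xx] by blast
    show "inverse x \<in> ?S" using vinv[OF M(1) xx] by blast
  qed
  have "sqrt (1 + sqrt 2) \<notin> ?S"
  proof
    assume "sqrt (1 + sqrt 2) \<in> ?S"
    then obtain w' where w: "(sqrt (1 + sqrt 2), w') \<in> M" by blast
    have "(sqrt (1 + sqrt 2) * sqrt (1 + sqrt 2), w' * w') \<in> M" using vmult[OF M(1) w w] .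
    then have a: "(1 + sqrt 2, w' * w') \<in> M" by simp
    have "(sqrt 2, - sqrt 2) \<in> M" using G1_props(2) M(2) by blast
    from vadd[OF M(1) v1[OF M(1)] this] have b: "(1 + sqrt 2, 1 - sqrt 2) \<in> M" by simp
    have "w' * w' = 1 - sqrt 2" using vfun[OF M(1) a b] .
    then show False using no_sqrt_neg by blast
  qed
  with pS show ?thesis by (intro exI[of _ ?S]) simp
qed

theorem mainTheorem10:
  shows "origami_numbers \<subset> {x::real. complex_of_real x \<in> F_sqrt}"
proof -
  have sub: "origami_numbers \<subseteq> {x::real. complex_of_real x \<in> F_sqrt}"
    using origami_sub_KR unfolding KR_def .
  obtain S where S: "pyth S" "sqrt (1 + sqrt 2) \<notin> S" using strict_witness by blast
  have "sqrt (1 + sqrt 2) \<notin> origami_numbers" using origami_numbers_sub[OF S(1)] S(2) by blast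
  moreover have "sqrt (1 + sqrt 2) \<in> {x::real. complex_of_real x \<in> F_sqrt}"
    using witness_KR unfolding KR_def .
  ultimately show ?thesis using sub by blast
qed

end
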